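(* Let $G=(V,E)$ be a finite, simple, connected graph which is Lichnerowicz sharp and distance regular. Then $G$ is effective Bonnet Myers sharp, i.e. with $K:=\min_{x\sim y}\kappa(x,y)$ one has $\operatorname{diam}_{\operatorname{eff}}(G)=\frac{\max_v\operatorname{Deg}(v)}{K}$.
   Context: $d$ is the combinatorial distance, $\operatorname{Deg}$ the degree, $\operatorname{diam}_{\operatorname{eff}}(G)=\frac{1}{|V|^2}\sum_{x,y}d(x,y)$. Laplacian $\Delta f(x)=\sum_{y\sim x}(f(y)-f(x))$. Ollivier curvature: $\kappa(x,y)=\inf\{\Delta f(x)-\Delta f(y): f(y)-f(x)=1,\ \max_{u\sim v}|f(u)-f(v)|=1\}$. Lichnerowicz sharp: the smallest positive eigenvalue $\lambda$ of $-\Delta$ equals $\min_{x\sim y}\kappa(x,y)$. Distance regular: there are numbers $b_n,c_n$ such that for every $x$ and every $z$ with $d(x,z)=n$, $z$ has $b_n$ neighbors at distance $n+1$ and $c_n$ neighbors at distance $n-1$ from $x$. *)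

theory Defs
  imports Complex_Main
begin

definition simple_graph :: "'a set \<Rightarrow> ('a \<Rightarrow> 'a \<Rightarrow> bool) \<Rightarrow> bool" where
  "simple_graph V E \<longleftrightarrow> finite V \<and> (\<forall>u v. E u v \<longrightarrow> u \<in> V \<and> v \<in> V)
     \<and> (\<forall>u v. E u v \<longrightarrow> E v u) \<and> (\<forall>u. \<not> E u u)"

definition is_walk :: "'a set \<Rightarrow> ('a \<Rightarrow> 'a \<Rightarrow> bool) \<Rightarrow> (nat \<Rightarrow> 'a) \<Rightarrow> nat \<Rightarrow> 'a \<Rightarrow> 'a \<Rightarrow> bool" where
  "is_walk V E p n x y \<longleftrightarrow> p 0 = x \<and> p n = y \<and> (\<forall>i\<le>n. p i \<in> V) \<and> (\<forall>i<n. E (p i) (p (Suc i)))"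

definition connected_graph :: "'a set \<Rightarrow> ('a \<Rightarrow> 'a \<Rightarrow> bool) \<Rightarrow> bool" where
  "connected_graph V E \<longleftrightarrow> (\<forall>x\<in>V. \<forall>y\<in>V. \<exists>p n. is_walk V E p n x y)"

definition gdist :: "'a set \<Rightarrow> ('a \<Rightarrow> 'a \<Rightarrow> bool) \<Rightarrow> 'a \<Rightarrow> 'a \<Rightarrow> nat" where
  "gdist V E x y = (LEAST n. \<exists>p. is_walk V E p n x y)"

definition Deg :: "'a set \<Rightarrow> ('a \<Rightarrow> 'a \<Rightarrow> bool) \<Rightarrow> 'a \<Rightarrow> nat" where
  "Deg V E x = card {y\<in>V. E x y}"

definition diam_eff :: "'a set \<Rightarrow> ('a \<Rightarrow> 'a \<Rightarrow> bool) \<Rightarrow> real" where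
  "diam_eff V E = (1 / real (card V) ^ 2) * (\<Sum>x\<in>V. \<Sum>y\<in>V. real (gdist V E x y))"

definition laplacian :: "'a set \<Rightarrow> ('a \<Rightarrow> 'a \<Rightarrow> bool) \<Rightarrow> ('a \<Rightarrow> real) \<Rightarrow> 'a \<Rightarrow> real" where
  "laplacian V E f x = (\<Sum>y\<in>{y\<in>V. E x y}. f y - f x)"

text \<open>Ollivier curvature (Lin--Lu--Yau / Muench--Wojciechowski limit-free formulation).\<close>
definition ollivier_curv :: "'a set \<Rightarrow> ('a \<Rightarrow> 'a \<Rightarrow> bool) \<Rightarrow> 'a \<Rightarrow> 'a \<Rightarrow> real" where
  "ollivier_curv V E x y = Inf {laplacian V E f x - laplacian V E f y | f.
      f y - f x = 1 \<and> Max {\<bar>f u - f v\<bar> | u v. u \<in> V \<and> v \<in> V \<and> E u v} = 1}"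

definition is_eigenvalue_neg_lap :: "'a set \<Rightarrow> ('a \<Rightarrow> 'a \<Rightarrow> bool) \<Rightarrow> real \<Rightarrow> bool" where
  "is_eigenvalue_neg_lap V E lam \<longleftrightarrow> (\<exists>f. (\<exists>x\<in>V. f x \<noteq> 0) \<and> (\<forall>x\<in>V. - laplacian V E f x = lam * f x))"

definition min_curv :: "'a set \<Rightarrow> ('a \<Rightarrow> 'a \<Rightarrow> bool) \<Rightarrow> real" where
  "min_curv V E = Min {ollivier_curv V E x y | x y. x \<in> V \<and> y \<in> V \<and> E x y}"

definition lichnerowicz_sharp :: "'a set \<Rightarrow> ('a \<Rightarrow> 'a \<Rightarrow> bool) \<Rightarrow> bool" where
  "lichnerowicz_sharp V E \<longleftrightarrow> (\<exists>lam. lam > 0 \<and> is_eigenvalue_neg_lap V E lam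
      \<and> (\<forall>mu. mu > 0 \<and> is_eigenvalue_neg_lap V E mu \<longrightarrow> lam \<le> mu)
      \<and> lam = min_curv V E)"

definition distance_regular :: "'a set \<Rightarrow> ('a \<Rightarrow> 'a \<Rightarrow> bool) \<Rightarrow> bool" where
  "distance_regular V E \<longleftrightarrow> (\<exists>b c :: nat \<Rightarrow> nat. \<forall>x\<in>V. \<forall>z\<in>V.
      card {w\<in>V. E z w \<and> gdist V E x w = gdist V E x z + 1} = b (gdist V E x z)
    \<and> card {w\<in>V. E z w \<and> gdist V E x w + 1 = gdist V E x z} = c (gdist V E x z))"

end

theory Submission
  imports Defs
begin


lemma seq_main:
  fixes A b c :: "nat \<Rightarrow> real" and K :: real and N :: nat
  assumes rec: "\<And>n. n \<le> N \<Longrightarrow> - K * A n = b n * (A (Suc n) - A n) - c n * (A n - A (n - 1))"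
    and lin: "\<And>n. n < N \<Longrightarrow> K \<le> (b n - c n) - (b (Suc n) - c (Suc n))"
    and bpos: "\<And>n. n < N \<Longrightarrow> b n > 0" and cpos: "\<And>n. 1 \<le> n \<Longrightarrow> n \<le> N \<Longrightarrow> c n > 0"
    and bnn: "\<And>n. b n \<ge> 0" and cnn: "\<And>n. c n \<ge> 0"
    and bN: "b N = 0" and c0: "c 0 = 0" and A0: "A 0 \<noteq> 0" and Kpos: "K > 0"
  shows "n \<le> N \<Longrightarrow> b n - c n = b 0 - K * real n"
proof -
  define \<delta> where "\<delta> n = A (Suc n) - A n" for n
  have ex: "\<exists>m<N. \<delta> m \<noteq> 0"
  proof (rule ccontr)
    assume "\<not> ?thesis"
    then have z: "\<And>m. m < N \<Longrightarrow> \<delta> m = 0" by auto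
    have "b 0 * \<delta> 0 = 0" using z bN by (cases N) auto
    then have "- K * A 0 = 0" using rec[of 0] c0 by (simp add: \<delta>_def)
    then show False using A0 Kpos by simp
  qed
  define M where "M = Max ((\<lambda>n. \<bar>\<delta> n\<bar>) ` {..<N})"
  have Mge: "\<And>n. n < N \<Longrightarrow> \<bar>\<delta> n\<bar> \<le> M" unfolding M_def by (intro Max_ge) auto
  obtain m0 where m0: "m0 < N" "\<bar>\<delta> m0\<bar> = M"
  proof -
    have "M \<in> (\<lambda>n. \<bar>\<delta> n\<bar>) ` {..<N}" unfolding M_def using ex by (intro Max_in) auto
    then show ?thesis using that by auto
  qed
  have Mpos: "M > 0"
  proof -
    obtain m where "m < N" "\<delta> m \<noteq> 0" using ex by blast
    then have "0 < \<bar>\<delta> m\<bar>" "\<bar>\<delta> m\<bar> \<le> M" using Mge by auto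
    then show ?thesis by linarith
  qed
  define t where "t = \<delta> m0"
  have t0: "t \<noteq> 0" using Mpos m0 t_def by auto
  define \<psi> where "\<psi> n = A n / t" for n
  define \<epsilon> where "\<epsilon> n = \<psi> (Suc n) - \<psi> n" for n
  have eps: "\<epsilon> n = \<delta> n / t" for n unfolding \<epsilon>_def \<psi>_def \<delta>_def by (simp add: diff_divide_distrib)
  have eb: "\<And>n. n < N \<Longrightarrow> \<epsilon> n \<le> 1"
  proof -
    fix n assume "n < N"
    then have "\<bar>\<delta> n\<bar> \<le> \<bar>t\<bar>" using Mge m0 t_def by simp
    then have "\<bar>\<delta> n\<bar> / \<bar>t\<bar> \<le> 1" using t0 by (simp add: divide_le_eq_1)
    then have "\<bar>\<epsilon> n\<bar> \<le> 1" by (simp only: eps abs_divide)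
    then show "\<epsilon> n \<le> 1" by simp
  qed
  have em0: "\<epsilon> m0 = 1" using eps t_def t0 by simp
  have rec2: "\<And>n. n \<le> N \<Longrightarrow> - K * \<psi> n = b n * \<epsilon> n - c n * (\<psi> n - \<psi> (n - 1))"
  proof -
    fix n assume n: "n \<le> N"
    have "- K * \<psi> n = (- K * A n) / t" by (simp add: \<psi>_def)
    also have "\<dots> = (b n * (A (Suc n) - A n) - c n * (A n - A (n - 1))) / t" using rec[OF n] by simp
    also have "\<dots> = b n * \<epsilon> n - c n * (\<psi> n - \<psi> (n - 1))"
      unfolding \<epsilon>_def \<psi>_def using t0 by (simp add: field_simps)
    finally show "- K * \<psi> n = b n * \<epsilon> n - c n * (\<psi> n - \<psi> (n - 1))" .
  qed
  have propg: "(0 < m \<longrightarrow> \<epsilon> (m - 1) = 1) \<and> (Suc m < N \<longrightarrow> \<epsilon> (Suc m) = 1)" if m: "m < N" "\<epsilon> m = 1" for m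
  proof -
    have r1: "- K * \<psi> m = b m - c m * (\<psi> m - \<psi> (m - 1))" using rec2[of m] m by simp
    have r2: "- K * \<psi> (Suc m) = b (Suc m) * \<epsilon> (Suc m) - c (Suc m)" using rec2[of "Suc m"] m \<epsilon>_def by simp
    have diff: "\<psi> (Suc m) - \<psi> m = 1" using m \<epsilon>_def by simp
    have key: "K = b m - c m * (\<psi> m - \<psi> (m - 1)) - b (Suc m) * \<epsilon> (Suc m) + c (Suc m)"
    proof -
      have "K * (\<psi> (Suc m) - \<psi> m) = b m - c m * (\<psi> m - \<psi> (m - 1)) - b (Suc m) * \<epsilon> (Suc m) + c (Suc m)"
        using r1 r2 by (simp add: algebra_simps)
      then show ?thesis using diff by simp
    qed
    have l: "K \<le> b m - c m - (b (Suc m) - c (Suc m))" using lin m by simp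
    have t1: "c m * ((\<psi> m - \<psi> (m - 1)) - 1) \<le> 0"
    proof (cases m)
      case 0 then show ?thesis using c0 by simp
    next
      case (Suc j)
      then have "\<psi> m - \<psi> (m - 1) = \<epsilon> j" using \<epsilon>_def by simp
      moreover have "\<epsilon> j \<le> 1" using eb Suc m by simp
      ultimately show ?thesis using cnn[of m] by (simp add: mult_nonneg_nonpos)
    qed
    have t2: "b (Suc m) * (\<epsilon> (Suc m) - 1) \<le> 0"
    proof (cases "Suc m < N")
      case True then show ?thesis using eb[of "Suc m"] bnn[of "Suc m"] by (simp add: mult_nonneg_nonpos)
    next
      case False then have "Suc m = N" using m by simp
      then show ?thesis using bN by simp
    qed
    have s: "c m * ((\<psi> m - \<psi> (m - 1)) - 1) + b (Suc m) * (\<epsilon> (Suc m) - 1) \<ge> 0"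
      using key l by (simp add: algebra_simps)
    have z1: "c m * ((\<psi> m - \<psi> (m - 1)) - 1) = 0" and z2: "b (Suc m) * (\<epsilon> (Suc m) - 1) = 0"
      using s t1 t2 by linarith+
    show ?thesis
    proof (intro conjI impI)
      assume "0 < m"
      then have "c m > 0" using cpos m by simp
      then have "\<psi> m - \<psi> (m - 1) = 1" using z1 by simp
      then show "\<epsilon> (m - 1) = 1" using \<open>0 < m\<close> \<epsilon>_def by simp
    next
      assume "Suc m < N"
      then have "b (Suc m) > 0" using bpos by simp
      then show "\<epsilon> (Suc m) = 1" using z2 by simp
    qed
  qed
  have up: "m0 + j < N \<longrightarrow> \<epsilon> (m0 + j) = 1" for j
  proof (induction j)
    case 0 show ?case using em0 by simp
  next
    case (Suc j)
    show ?case
    proof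
      assume j: "m0 + Suc j < N"
      then have a: "m0 + j < N" by simp
      with Suc have b: "\<epsilon> (m0 + j) = 1" by blast
      have "Suc (m0 + j) < N" using j by simp
      then have "\<epsilon> (Suc (m0 + j)) = 1" using propg[OF a b] by blast
      then show "\<epsilon> (m0 + Suc j) = 1" by simp
    qed
  qed
  have down: "j \<le> m0 \<longrightarrow> \<epsilon> (m0 - j) = 1" for j
  proof (induction j)
    case 0 show ?case using em0 by simp
  next
    case (Suc j)
    show ?case
    proof
      assume j: "Suc j \<le> m0"
      then have a: "m0 - j < N" using m0 by simp
      from j Suc have b: "\<epsilon> (m0 - j) = 1" by simp
      have "0 < m0 - j" using j by simp
      then have "\<epsilon> (m0 - j - 1) = 1" using propg[OF a b] by blast
      moreover have "m0 - j - 1 = m0 - Suc j" by simp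
      ultimately show "\<epsilon> (m0 - Suc j) = 1" by simp
    qed
  qed
  have all: "\<And>n. n < N \<Longrightarrow> \<epsilon> n = 1"
  proof -
    fix n assume n: "n < N"
    show "\<epsilon> n = 1"
    proof (cases "m0 \<le> n")
      case True
      then have "m0 + (n - m0) = n" by simp
      then show ?thesis using up[of "n - m0"] n by metis
    next
      case False
      then have "m0 - (m0 - n) = n" "m0 - n \<le> m0" by simp_all
      then show ?thesis using down[of "m0 - n"] by metis
    qed
  qed
  have lin\<psi>: "\<And>n. n \<le> N \<Longrightarrow> \<psi> n = \<psi> 0 + real n"
  proof -
    fix n show "n \<le> N \<Longrightarrow> \<psi> n = \<psi> 0 + real n"
    proof (induction n)
      case (Suc n)
      then have "\<epsilon> n = 1" using all by simp
      then show ?case using Suc \<epsilon>_def by simp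
    qed simp
  qed
  have form: "\<And>n. n \<le> N \<Longrightarrow> - K * (\<psi> 0 + real n) = b n - c n"
  proof -
    fix n assume n: "n \<le> N"
    have e1: "b n * \<epsilon> n = b n" using all[of n] bN n by (cases "n < N") auto
    have e2: "c n * (\<psi> n - \<psi> (n - 1)) = c n"
    proof (cases n)
      case 0 then show ?thesis using c0 by simp
    next
      case (Suc j) then show ?thesis using all[of j] n \<epsilon>_def by simp
    qed
    have "- K * \<psi> n = b n - c n" using rec2[OF n] unfolding e1 e2 .
    then show "- K * (\<psi> 0 + real n) = b n - c n" using lin\<psi>[OF n] by simp
  qed
  assume n: "n \<le> N"
  show "b n - c n = b 0 - K * real n" using form[OF n] form[of 0] c0 by (simp add: algebra_simps)
qed



definition ecc :: "'a set \<Rightarrow> ('a \<Rightarrow> 'a \<Rightarrow> bool) \<Rightarrow> 'a \<Rightarrow> nat" where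
  "ecc V E x = Max ((\<lambda>z. gdist V E x z) ` V)"


locale G = fixes V :: "'a set" and E :: "'a \<Rightarrow> 'a \<Rightarrow> bool"
  assumes sg: "simple_graph V E" and cg: "connected_graph V E"
begin

abbreviation "d x y \<equiv> gdist V E x y"

lemma finV: "finite V" using sg by (simp add: simple_graph_def)
lemma EV: "E u v \<Longrightarrow> u \<in> V \<and> v \<in> V" using sg by (simp add: simple_graph_def)
lemma Esym: "E u v \<Longrightarrow> E v u" using sg by (simp add: simple_graph_def)
lemma Eirr: "\<not> E u u" using sg by (simp add: simple_graph_def)

lemma walk_ex: "x \<in> V \<Longrightarrow> y \<in> V \<Longrightarrow> \<exists>p. is_walk V E p (d x y) x y"
proof -
  assume "x \<in> V" "y \<in> V"
  then obtain p n where "is_walk V E p n x y" using cg unfolding connected_graph_def by blast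
  then show ?thesis unfolding gdist_def by (rule LeastI_ex[where P="\<lambda>n. \<exists>p. is_walk V E p n x y", OF exI[of _ n] , OF exI[of _ p]])
qed

lemma dist_le: "is_walk V E p n x y \<Longrightarrow> d x y \<le> n"
  unfolding gdist_def by (rule Least_le) blast

lemma dist_self: "x \<in> V \<Longrightarrow> d x x = 0"
proof -
  assume "x \<in> V"
  then have "is_walk V E (\<lambda>_. x) 0 x x" by (simp add: is_walk_def)
  then show ?thesis using dist_le by fastforce
qed

lemma dist_zero: "x \<in> V \<Longrightarrow> y \<in> V \<Longrightarrow> d x y = 0 \<Longrightarrow> x = y"
  using walk_ex[of x y] by (auto simp: is_walk_def)

lemma walk_ext: "is_walk V E p n x u \<Longrightarrow> E u v \<Longrightarrow> is_walk V E (p(Suc n := v)) (Suc n) x v"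
  using EV by (auto simp: is_walk_def less_Suc_eq le_Suc_eq)

lemma dist_edge: "x \<in> V \<Longrightarrow> E u v \<Longrightarrow> d x v \<le> d x u + 1"
proof -
  assume a: "x \<in> V" "E u v"
  then obtain p where "is_walk V E p (d x u) x u" using walk_ex EV by blast
  from walk_ext[OF this a(2)] show ?thesis using dist_le by fastforce
qed

lemma dist_edge2: "x \<in> V \<Longrightarrow> E u v \<Longrightarrow> d x v = d x u + 1 \<or> d x v + 1 = d x u \<or> d x v = d x u"
  using dist_edge[of x u v] dist_edge[of x v u] Esym by force

lemma dist_pred: "x \<in> V \<Longrightarrow> z \<in> V \<Longrightarrow> d x z = Suc n \<Longrightarrow> \<exists>w. E w z \<and> d x w = n"
proof -
  assume a: "x \<in> V" "z \<in> V" "d x z = Suc n"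
  then obtain p where p: "is_walk V E p (Suc n) x z" using walk_ex by fastforce
  then have w1: "is_walk V E p n x (p n)" and e: "E (p n) z" by (auto simp: is_walk_def)
  have "d x (p n) \<le> n" using dist_le[OF w1] .
  moreover have "d x z \<le> d x (p n) + 1" using dist_edge[OF a(1) e] .
  ultimately show ?thesis using e a(3) by auto
qed

lemma dist_layers: "x \<in> V \<Longrightarrow> z \<in> V \<Longrightarrow> j \<le> d x z \<Longrightarrow>
   \<exists>w\<in>V. d x w = d x z - j \<and> (0 < j \<longrightarrow> (\<exists>u. E w u \<and> d x u = Suc (d x w)))"
proof (induction j)
  case 0
  then show ?case by auto
next
  case (Suc j)
  then obtain w where w: "w \<in> V" "d x w = d x z - j" by auto
  then have "d x w = Suc (d x z - Suc j)" using Suc.prems by simp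
  then obtain w' where "E w' w" "d x w' = d x z - Suc j" using dist_pred[OF Suc.prems(1) w(1)] by blast
  then show ?case using EV w \<open>d x w = Suc (d x z - Suc j)\<close> by metis
qed

lemma sum_lap_zero: "(\<Sum>z\<in>V. laplacian V E g z) = 0"
proof -
  have "(\<Sum>z\<in>V. laplacian V E g z) = (\<Sum>z\<in>V. \<Sum>u\<in>V. if E z u then g u - g z else 0)"
    unfolding laplacian_def by (simp add: sum.inter_filter[OF finV])
  also have "\<dots> = (\<Sum>u\<in>V. \<Sum>z\<in>V. if E z u then g u - g z else 0)" by (rule sum.swap)
  also have "\<dots> = (\<Sum>u\<in>V. \<Sum>z\<in>V. - (if E u z then g z - g u else 0))"
    by (intro sum.cong refl) (auto dest: Esym)
  also have "\<dots> = - (\<Sum>z\<in>V. laplacian V E g z)"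
    unfolding laplacian_def by (simp add: sum.inter_filter[OF finV] sum_negf)
  finally show ?thesis by simp
qed

end

lemma sum_if_const: "finite A \<Longrightarrow> (\<Sum>u\<in>A. if P u then a else 0) = real (card {u\<in>A. P u}) * (a::real)"
  by (simp add: sum.inter_filter[symmetric])

locale DR = G + fixes b c :: "nat \<Rightarrow> nat"
  assumes bc: "\<And>x z. x \<in> V \<Longrightarrow> z \<in> V \<Longrightarrow>
      card {w\<in>V. E z w \<and> d x w = d x z + 1} = b (d x z) \<and> card {w\<in>V. E z w \<and> d x w + 1 = d x z} = c (d x z)"
begin

lemma bcard: "x \<in> V \<Longrightarrow> z \<in> V \<Longrightarrow> card {w\<in>V. E z w \<and> d x w = d x z + 1} = b (d x z)" using bc by blast
lemma ccard: "x \<in> V \<Longrightarrow> z \<in> V \<Longrightarrow> card {w\<in>V. E z w \<and> d x w + 1 = d x z} = c (d x z)" using bc by blast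

lemma deg: "z \<in> V \<Longrightarrow> Deg V E z = b 0"
proof -
  assume z: "z \<in> V"
  have "{w\<in>V. E z w} = {w\<in>V. E z w \<and> d z w = d z z + 1}"
  proof (safe)
    fix w assume w: "w \<in> V" "E z w"
    have "d z w \<le> 1" using dist_edge[OF z w(2)] dist_self[OF z] by simp
    moreover have "d z w \<noteq> 0" using dist_zero[OF z w(1)] w(2) Eirr by metis
    ultimately show "d z w = d z z + 1" using dist_self[OF z] by simp
  qed
  then show ?thesis unfolding Deg_def using bcard[OF z z] dist_self[OF z] by simp
qed

lemma c0: "x \<in> V \<Longrightarrow> c 0 = 0"
  using ccard[of x x] dist_self[of x] by simp

lemma lap_radial: assumes x: "x \<in> V" and z: "z \<in> V"
  shows "laplacian V E (\<lambda>w. \<phi> (d x w)) z = real (b (d x z)) * (\<phi> (d x z + 1) - \<phi> (d x z))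
     + real (c (d x z)) * (\<phi> (d x z - 1) - \<phi> (d x z))"
proof -
  have "laplacian V E (\<lambda>w. \<phi> (d x w)) z = (\<Sum>u\<in>V. if E z u then \<phi> (d x u) - \<phi> (d x z) else 0)"
    unfolding laplacian_def by (simp add: sum.inter_filter[OF finV])
  also have "\<dots> = (\<Sum>u\<in>V. (if E z u \<and> d x u = d x z + 1 then \<phi> (d x z + 1) - \<phi> (d x z) else 0)
      + (if E z u \<and> d x u + 1 = d x z then \<phi> (d x z - 1) - \<phi> (d x z) else 0))"
  proof (intro sum.cong refl)
    fix u assume "u \<in> V"
    show "(if E z u then \<phi> (d x u) - \<phi> (d x z) else 0) = (if E z u \<and> d x u = d x z + 1 then \<phi> (d x z + 1) - \<phi> (d x z) else 0)
      + (if E z u \<and> d x u + 1 = d x z then \<phi> (d x z - 1) - \<phi> (d x z) else 0)"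
    proof (cases "E z u")
      case True
      then consider "d x u = d x z + 1" | "d x u + 1 = d x z" | "d x u = d x z" using dist_edge2[OF x, of z u] by blast
      then show ?thesis
      proof cases
        case 2
        then have "d x u = d x z - 1" by simp
        then show ?thesis using True 2 by simp
      qed (use True in auto)
    qed simp
  qed
  also have "\<dots> = real (b (d x z)) * (\<phi> (d x z + 1) - \<phi> (d x z))
     + real (c (d x z)) * (\<phi> (d x z - 1) - \<phi> (d x z))"
    using bcard[OF x z] ccard[OF x z] by (simp add: sum.distrib sum_if_const[OF finV] del: One_nat_def)
  finally show ?thesis .
qed

end

locale DRx = DR + fixes x assumes xV: "x \<in> V"
begin

abbreviation "N \<equiv> ecc V E x"

lemma dle: "z \<in> V \<Longrightarrow> d x z \<le> N"
  unfolding ecc_def using finV by auto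

lemma exN: "\<exists>z\<in>V. d x z = N"
proof -
  have "N \<in> (\<lambda>z. d x z) ` V" unfolding ecc_def using finV xV by (intro Max_in) auto
  then show ?thesis by auto
qed

lemma layer: "n \<le> N \<Longrightarrow> \<exists>w\<in>V. d x w = n \<and> (n < N \<longrightarrow> (\<exists>u. E w u \<and> d x u = Suc n))"
proof -
  assume n: "n \<le> N"
  obtain z where z: "z \<in> V" "d x z = N" using exN by blast
  from dist_layers[OF xV z(1), of "N - n"] z n show ?thesis by auto
qed

lemma bpos: "n < N \<Longrightarrow> b n > 0"
proof -
  assume n: "n < N"
  obtain w u where w: "w \<in> V" "d x w = n" "E w u" "d x u = Suc n" using layer[of n] n by auto
  have "u \<in> {u\<in>V. E w u \<and> d x u = d x w + 1}" using w EV by auto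
  then have "card {u\<in>V. E w u \<and> d x u = d x w + 1} > 0" using finV by (intro card_gt_0_iff[THEN iffD2]) auto
  then show ?thesis using bcard[OF xV w(1)] w(2) by simp
qed

lemma cpos: "1 \<le> n \<Longrightarrow> n \<le> N \<Longrightarrow> c n > 0"
proof -
  assume n: "1 \<le> n" "n \<le> N"
  obtain w where w: "w \<in> V" "d x w = n" using layer[of n] n by auto
  obtain m where m: "n = Suc m" using n by (cases n) auto
  obtain u where u: "E u w" "d x u = m" using dist_pred[OF xV w(1)] w m by blast
  have "u \<in> {u\<in>V. E w u \<and> d x u + 1 = d x w}" using u w m EV Esym by auto
  then have "card {u\<in>V. E w u \<and> d x u + 1 = d x w} > 0" using finV by (intro card_gt_0_iff[THEN iffD2]) auto
  then show ?thesis using ccard[OF xV w(1)] w(2) by simp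
qed

lemma bN: "b N = 0"
proof -
  obtain z where z: "z \<in> V" "d x z = N" using exN by blast
  have "{w\<in>V. E z w \<and> d x w = d x z + 1} = {}" using dle z by fastforce
  then show ?thesis using bcard[OF xV z(1)] z by (metis card.empty)
qed

definition k where "k n = card {w\<in>V. d x w = n}"

lemma kpos: "n \<le> N \<Longrightarrow> k n > 0"
  unfolding k_def using layer finV by (subst card_gt_0_iff) auto

lemma dc1: "(\<Sum>w\<in>V. \<Sum>u\<in>V. if d x w = n \<and> E w u \<and> d x u = Suc n then h u else 0)
   = real (c (Suc n)) * (\<Sum>u\<in>V. if d x u = Suc n then h u else (0::real))"
proof -
  have "(\<Sum>w\<in>V. \<Sum>u\<in>V. if d x w = n \<and> E w u \<and> d x u = Suc n then h u else 0)
     = (\<Sum>u\<in>V. \<Sum>w\<in>V. if d x w = n \<and> E w u \<and> d x u = Suc n then h u else 0)" by (rule sum.swap)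
  also have "\<dots> = (\<Sum>u\<in>V. if d x u = Suc n then real (c (Suc n)) * h u else 0)"
  proof (intro sum.cong refl)
    fix u assume u: "u \<in> V"
    show "(\<Sum>w\<in>V. if d x w = n \<and> E w u \<and> d x u = Suc n then h u else 0) = (if d x u = Suc n then real (c (Suc n)) * h u else 0)"
    proof (cases "d x u = Suc n")
      case True
      have "(\<Sum>w\<in>V. if d x w = n \<and> E w u \<and> d x u = Suc n then h u else 0) = (\<Sum>w\<in>V. if E u w \<and> d x w + 1 = d x u then h u else 0)"
        using True by (intro sum.cong refl) (auto dest: Esym)
      also have "\<dots> = real (c (Suc n)) * h u" using sum_if_const[OF finV] ccard[OF xV u] True by simp
      finally show ?thesis using True by simp
    qed simp
  qed
  also have "\<dots> = real (c (Suc n)) * (\<Sum>u\<in>V. if d x u = Suc n then h u else (0::real))"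
    by (simp add: sum_distrib_left if_distrib cong: if_cong)
  finally show ?thesis .
qed

lemma dc2: "(\<Sum>w\<in>V. \<Sum>u\<in>V. if d x w = n \<and> E w u \<and> d x u = Suc n then h w else 0)
   = real (b n) * (\<Sum>w\<in>V. if d x w = n then h w else (0::real))"
proof -
  have "(\<Sum>w\<in>V. \<Sum>u\<in>V. if d x w = n \<and> E w u \<and> d x u = Suc n then h w else 0)
     = (\<Sum>w\<in>V. if d x w = n then real (b n) * h w else 0)"
  proof (intro sum.cong refl)
    fix w assume w: "w \<in> V"
    show "(\<Sum>u\<in>V. if d x w = n \<and> E w u \<and> d x u = Suc n then h w else 0) = (if d x w = n then real (b n) * h w else 0)"
    proof (cases "d x w = n")
      case True
      have "(\<Sum>u\<in>V. if d x w = n \<and> E w u \<and> d x u = Suc n then h w else 0) = (\<Sum>u\<in>V. if E w u \<and> d x u = d x w + 1 then h w else 0)"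
        using True by (intro sum.cong refl) auto
      also have "\<dots> = real (b n) * h w" using sum_if_const[OF finV] bcard[OF xV w] True by simp
      finally show ?thesis using True by simp
    qed simp
  qed
  also have "\<dots> = real (b n) * (\<Sum>w\<in>V. if d x w = n then h w else (0::real))"
    by (simp add: sum_distrib_left if_distrib cong: if_cong)
  finally show ?thesis .
qed

lemma kk: "real (c (Suc n)) * real (k (Suc n)) = real (b n) * real (k n)"
proof -
  have "real (k m) = (\<Sum>w\<in>V. if d x w = m then 1 else (0::real))" for m
    unfolding k_def using sum_if_const[OF finV, of "\<lambda>w. d x w = m" 1] by simp
  then show ?thesis using dc1[of n "\<lambda>_. 1"] dc2[of n "\<lambda>_. 1"] by simp
qed

end

context G begin

lemma edgeset_fin: "finite {\<bar>f a - f b\<bar> | a b. a \<in> V \<and> b \<in> V \<and> E a b}"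
proof -
  have "{\<bar>f a - f b\<bar> | a b. a \<in> V \<and> b \<in> V \<and> E a b} \<subseteq> (\<lambda>(a,b). \<bar>f a - f b\<bar>) ` (V \<times> V)" by auto
  then show ?thesis using finV finite_subset by blast
qed

lemma lap_bound: assumes "\<forall>a b. E a b \<longrightarrow> \<bar>f a - f b\<bar> \<le> (1::real)" and "w \<in> V"
  shows "\<bar>laplacian V E f w\<bar> \<le> real (card V)"
proof -
  have "\<bar>laplacian V E f w\<bar> \<le> (\<Sum>y\<in>{y\<in>V. E w y}. \<bar>f y - f w\<bar>)" unfolding laplacian_def by (rule sum_abs)
  also have "\<dots> \<le> (\<Sum>y\<in>{y\<in>V. E w y}. 1)" 
  proof (rule sum_mono)
    fix y assume "y \<in> {y\<in>V. E w y}"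
    then have "E w y" by simp
    then have "\<bar>f w - f y\<bar> \<le> 1" using assms(1) by blast
    moreover have "\<bar>f y - f w\<bar> = \<bar>f w - f y\<bar>" by (rule abs_minus_commute)
    ultimately show "\<bar>f y - f w\<bar> \<le> 1" by linarith
  qed
  also have "\<dots> = real (card {y\<in>V. E w y})" by simp
  also have "\<dots> \<le> real (card V)" using finV by (simp add: card_mono)
  finally show ?thesis .
qed

lemma curv_le: assumes e: "E w u" and f1: "f u - f w = 1" and lip: "\<forall>a b. E a b \<longrightarrow> \<bar>f a - f b\<bar> \<le> (1::real)"
  shows "min_curv V E \<le> laplacian V E f w - laplacian V E f u"
proof -
  have wu: "w \<in> V" "u \<in> V" using EV e by auto
  let ?S = "{laplacian V E f w - laplacian V E f u | f. f u - f w = 1 \<and> Max {\<bar>f a - f b\<bar> | a b. a \<in> V \<and> b \<in> V \<and> E a b} = 1}"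
  have mx: "Max {\<bar>f a - f b\<bar> | a b. a \<in> V \<and> b \<in> V \<and> E a b} = 1"
  proof (rule Max_eqI[OF edgeset_fin])
    show "y \<le> 1" if "y \<in> {\<bar>f a - f b\<bar> | a b. a \<in> V \<and> b \<in> V \<and> E a b}" for y using that lip by auto
    have "\<bar>f w - f u\<bar> = 1" using f1 by simp
    then show "1 \<in> {\<bar>f a - f b\<bar> | a b. a \<in> V \<and> b \<in> V \<and> E a b}" using e wu
      by (intro CollectI exI[of _ w] exI[of _ u] conjI) auto
  qed
  have mem: "laplacian V E f w - laplacian V E f u \<in> ?S" by (rule CollectI, rule exI[of _ f]) (simp add: f1 mx)
  have bdd: "bdd_below ?S"
  proof (rule bdd_belowI[of _ "- 2 * real (card V)"])
    fix y assume "y \<in> ?S"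
    then obtain g where g: "y = laplacian V E g w - laplacian V E g u"
      "Max {\<bar>g a - g b\<bar> | a b. a \<in> V \<and> b \<in> V \<and> E a b} = 1"
      unfolding mem_Collect_eq by (elim exE conjE) simp
    have "\<forall>a b. E a b \<longrightarrow> \<bar>g a - g b\<bar> \<le> 1"
    proof (intro allI impI)
      fix a b assume ab: "E a b"
      have "\<bar>g a - g b\<bar> \<in> {\<bar>g a - g b\<bar> | a b. a \<in> V \<and> b \<in> V \<and> E a b}"
        using EV[OF ab] ab by (intro CollectI exI[of _ a] exI[of _ b] conjI) auto
      from Max_ge[OF edgeset_fin this] show "\<bar>g a - g b\<bar> \<le> 1" using g(2) by simp
    qed
    then have "\<bar>laplacian V E g w\<bar> \<le> real (card V)" "\<bar>laplacian V E g u\<bar> \<le> real (card V)"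
      using lap_bound[of g w] lap_bound[of g u] wu by auto
    then have "- real (card V) \<le> laplacian V E g w" "laplacian V E g u \<le> real (card V)"
      by (simp_all add: abs_le_iff)
    then show "- 2 * real (card V) \<le> y" using g(1) by linarith
  qed
  have "ollivier_curv V E w u \<le> laplacian V E f w - laplacian V E f u"
    unfolding ollivier_curv_def by (rule cInf_lower[OF mem bdd])
  moreover have "min_curv V E \<le> ollivier_curv V E w u"
  proof -
    have "{ollivier_curv V E x y | x y. x \<in> V \<and> y \<in> V \<and> E x y} \<subseteq> (\<lambda>(x,y). ollivier_curv V E x y) ` (V \<times> V)" by auto
    then have "finite {ollivier_curv V E x y | x y. x \<in> V \<and> y \<in> V \<and> E x y}" using finV finite_subset by blast
    moreover have "ollivier_curv V E w u \<in> {ollivier_curv V E x y | x y. x \<in> V \<and> y \<in> V \<and> E x y}" using wu e by blast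
    ultimately show ?thesis unfolding min_curv_def by (rule Min_le)
  qed
  ultimately show ?thesis by linarith
qed

end

context DRx begin

lemma lin_test: "n < N \<Longrightarrow> min_curv V E \<le> (real (b n) - real (c n)) - (real (b (Suc n)) - real (c (Suc n)))"
proof -
  assume n: "n < N"
  obtain w u where w: "w \<in> V" "d x w = n" "E w u" "d x u = Suc n" using layer[of n] n by auto
  have u: "u \<in> V" using EV w by auto
  have lip: "\<forall>a b. E a b \<longrightarrow> \<bar>real (d x a) - real (d x b)\<bar> \<le> 1"
  proof (intro allI impI)
    fix a b assume "E a b"
    then have "d x b \<le> d x a + 1" "d x a \<le> d x b + 1" using dist_edge[OF xV] Esym by blast+
    then show "\<bar>real (d x a) - real (d x b)\<bar> \<le> 1" by linarith
  qed
  have "min_curv V E \<le> laplacian V E (\<lambda>v. real (d x v)) w - laplacian V E (\<lambda>v. real (d x v)) u"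
    using curv_le[OF w(3) _ lip] w by simp
  also have "laplacian V E (\<lambda>v. real (d x v)) w = real (b n) - real (c n)"
    using lap_radial[OF xV w(1), of real] w(2) c0[OF xV] by (cases n) auto
  also have "laplacian V E (\<lambda>v. real (d x v)) u = real (b (Suc n)) - real (c (Suc n))"
    using lap_radial[OF xV u, of real] w(4) by simp
  finally show ?thesis .
qed

end

locale DRxf = DRx + fixes f :: "'a \<Rightarrow> real" and K :: real
  assumes eig: "\<And>w. w \<in> V \<Longrightarrow> - laplacian V E f w = K * f w"
begin

definition s where "s n = (\<Sum>w\<in>V. if d x w = n then f w else 0)"
definition A where "A n = s n / real (k n)"
definition U where "U n = (\<Sum>w\<in>V. \<Sum>u\<in>V. if d x w = n \<and> E w u \<and> d x u = Suc n then f u - f w else 0)"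

lemma swap_neg: "(\<Sum>w\<in>V. \<Sum>u\<in>V. if P w u then f u - f w else 0) = - (\<Sum>w\<in>V. \<Sum>u\<in>V. if P u w then f u - f w else 0)"
proof -
  have "(\<Sum>w\<in>V. \<Sum>u\<in>V. if P w u then f u - f w else 0) = (\<Sum>u\<in>V. \<Sum>w\<in>V. if P w u then f u - f w else 0)"
    by (rule sum.swap)
  also have "\<dots> = (\<Sum>u\<in>V. \<Sum>w\<in>V. - (if P w u then f w - f u else 0))"
    by (intro sum.cong refl) auto
  also have "\<dots> = - (\<Sum>w\<in>V. \<Sum>u\<in>V. if P u w then f u - f w else 0)"
    by (simp add: sum_negf)
  finally show ?thesis .
qed

lemma layer_lap: "(\<Sum>w\<in>V. if d x w = n then laplacian V E f w else 0) = U n - (if n = 0 then 0 else U (n - 1))"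
proof -
  let ?g = "\<lambda>w u. f u - f w"
  have "(\<Sum>w\<in>V. if d x w = n then laplacian V E f w else 0)
     = (\<Sum>w\<in>V. \<Sum>u\<in>V. if d x w = n \<and> E w u then ?g w u else 0)"
  proof (intro sum.cong refl)
    fix w assume "w \<in> V"
    show "(if d x w = n then laplacian V E f w else 0) = (\<Sum>u\<in>V. if d x w = n \<and> E w u then ?g w u else 0)"
      unfolding laplacian_def by (cases "d x w = n") (simp_all add: sum.inter_filter[OF finV])
  qed
  also have "\<dots> = (\<Sum>w\<in>V. \<Sum>u\<in>V. (if d x w = n \<and> E w u \<and> d x u = Suc n then ?g w u else 0)
      + (if d x w = n \<and> E w u \<and> Suc (d x u) = n then ?g w u else 0)
      + (if d x w = n \<and> E w u \<and> d x u = n then ?g w u else 0))"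
  proof (intro sum.cong refl)
    fix w u assume "w \<in> V" "u \<in> V"
    show "(if d x w = n \<and> E w u then ?g w u else 0) = (if d x w = n \<and> E w u \<and> d x u = Suc n then ?g w u else 0)
      + (if d x w = n \<and> E w u \<and> Suc (d x u) = n then ?g w u else 0)
      + (if d x w = n \<and> E w u \<and> d x u = n then ?g w u else 0)"
    proof (cases "d x w = n \<and> E w u")
      case True
      then consider "d x u = Suc n" | "Suc (d x u) = n" | "d x u = n" using dist_edge2[OF xV, of w u] by force
      then show ?thesis using True by cases auto
    qed auto
  qed
  also have "\<dots> = U n + (\<Sum>w\<in>V. \<Sum>u\<in>V. if d x w = n \<and> E w u \<and> Suc (d x u) = n then ?g w u else 0)
      + (\<Sum>w\<in>V. \<Sum>u\<in>V. if d x w = n \<and> E w u \<and> d x u = n then ?g w u else 0)"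
    unfolding U_def by (simp add: sum.distrib)
  also have "(\<Sum>w\<in>V. \<Sum>u\<in>V. if d x w = n \<and> E w u \<and> d x u = n then ?g w u else 0) = 0"
  proof -
    have "(\<Sum>w\<in>V. \<Sum>u\<in>V. if d x w = n \<and> E w u \<and> d x u = n then ?g w u else 0)
      = - (\<Sum>w\<in>V. \<Sum>u\<in>V. if d x u = n \<and> E u w \<and> d x w = n then ?g w u else 0)"
      by (rule swap_neg)
    also have "(\<Sum>w\<in>V. \<Sum>u\<in>V. if d x u = n \<and> E u w \<and> d x w = n then ?g w u else 0)
       = (\<Sum>w\<in>V. \<Sum>u\<in>V. if d x w = n \<and> E w u \<and> d x u = n then ?g w u else 0)"
      by (intro sum.cong refl) (auto dest: Esym)
    finally show ?thesis by simp
  qed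
  also have "(\<Sum>w\<in>V. \<Sum>u\<in>V. if d x w = n \<and> E w u \<and> Suc (d x u) = n then ?g w u else 0)
      = - (if n = 0 then 0 else U (n - 1))"
  proof (cases n)
    case 0 then show ?thesis by simp
  next
    case (Suc m)
    have "(\<Sum>w\<in>V. \<Sum>u\<in>V. if d x w = n \<and> E w u \<and> Suc (d x u) = n then ?g w u else 0)
      = - (\<Sum>w\<in>V. \<Sum>u\<in>V. if d x u = n \<and> E u w \<and> Suc (d x w) = n then ?g w u else 0)"
      by (rule swap_neg)
    also have "(\<Sum>w\<in>V. \<Sum>u\<in>V. if d x u = n \<and> E u w \<and> Suc (d x w) = n then ?g w u else 0) = U m"
      unfolding U_def using Suc by (intro sum.cong refl) (auto dest: Esym)
    finally show ?thesis using Suc by simp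
  qed
  finally show ?thesis by simp
qed

lemma U_s: "U n = real (c (Suc n)) * s (Suc n) - real (b n) * s n"
proof -
  have "U n = (\<Sum>w\<in>V. \<Sum>u\<in>V. if d x w = n \<and> E w u \<and> d x u = Suc n then f u else 0)
     - (\<Sum>w\<in>V. \<Sum>u\<in>V. if d x w = n \<and> E w u \<and> d x u = Suc n then f w else 0)"
    unfolding U_def by (simp add: sum_subtractf[symmetric] if_distrib cong: if_cong)
  then show ?thesis unfolding s_def using dc1[of n f] dc2[of n f] by simp
qed

lemma s_kA: "s n = real (k n) * A n"
proof (cases "k n = 0")
  case True
  then have "{w\<in>V. d x w = n} = {}" unfolding k_def using finV by simp
  then have "s n = 0" unfolding s_def by (simp add: sum.inter_filter[OF finV, symmetric])
  then show ?thesis using True by (simp add: A_def)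
next
  case False then show ?thesis by (simp add: A_def)
qed

lemma U_A: "U n = real (b n) * real (k n) * (A (Suc n) - A n)"
  using U_s[of n] s_kA[of n] s_kA[of "Suc n"] kk[of n] by (simp add: algebra_simps)

lemma recA: assumes n: "n \<le> N"
  shows "- K * A n = real (b n) * (A (Suc n) - A n) - real (c n) * (A n - A (n - 1))"
proof -
  have "(\<Sum>w\<in>V. if d x w = n then laplacian V E f w else 0) = (\<Sum>w\<in>V. if d x w = n then - K * f w else 0)"
    using eig by (intro sum.cong refl) (metis add.inverse_inverse mult_minus_left)
  also have "\<dots> = - K * s n" unfolding s_def by (simp add: sum_distrib_left if_distrib cong: if_cong)
  finally have e: "U n - (if n = 0 then 0 else U (n - 1)) = - K * s n" using layer_lap by simp
  have u1: "(if n = 0 then 0 else U (n - 1)) = real (c n) * real (k n) * (A n - A (n - 1))"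
  proof (cases n)
    case 0 then show ?thesis using c0[OF xV] by simp
  next
    case (Suc m)
    then show ?thesis using U_A[of m] kk[of m] by simp
  qed
  have eq: "real (k n) * (- K * A n) = real (k n) * (real (b n) * (A (Suc n) - A n) - real (c n) * (A n - A (n - 1)))"
    using e u1 U_A[of n] s_kA[of n] by (simp add: algebra_simps)
  have kne: "real (k n) \<noteq> 0" using kpos[OF n] by simp
  show ?thesis using mult_left_cancel[OF kne] eq by blast
qed

lemma A0: "A 0 = f x"
proof -
  have S0: "{w\<in>V. d x w = 0} = {x}" using dist_zero[OF xV] dist_self[OF xV] xV by auto
  have "s 0 = f x" unfolding s_def by (simp add: sum.inter_filter[OF finV, symmetric] S0)
  moreover have "k 0 = 1" unfolding k_def S0 by simp
  ultimately show ?thesis by (simp add: A_def)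
qed

lemma lin_all: assumes "f x \<noteq> 0" "K > 0" "K = min_curv V E" and n: "n \<le> N"
  shows "real (b n) - real (c n) = real (b 0) - K * real n"
proof (rule seq_main[where A=A and b="\<lambda>n. real (b n)" and c="\<lambda>n. real (c n)" and K=K and N=N, OF _ _ _ _ _ _ _ _ _ _ n])
  show "\<And>n. n \<le> N \<Longrightarrow> - K * A n = real (b n) * (A (Suc n) - A n) - real (c n) * (A n - A (n - 1))" by (rule recA)
  show "\<And>n. n < N \<Longrightarrow> K \<le> real (b n) - real (c n) - (real (b (Suc n)) - real (c (Suc n)))" using lin_test assms(3) by simp
  show "\<And>n. n < N \<Longrightarrow> 0 < real (b n)" using bpos by simp
  show "\<And>n. 1 \<le> n \<Longrightarrow> n \<le> N \<Longrightarrow> 0 < real (c n)" using cpos by simp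
  show "real (b N) = 0" using bN by simp
  show "real (c 0) = 0" using c0[OF xV] by simp
  show "A 0 \<noteq> 0" using A0 assms(1) by simp
qed (use assms in auto)

end

context DR begin

lemma ecc_eq: assumes x: "x \<in> V" and y: "y \<in> V" shows "ecc V E x = ecc V E y"
proof -
  interpret X: DRx V E b c x by unfold_locales (rule x)
  interpret Y: DRx V E b c y by unfold_locales (rule y)
  show ?thesis
  proof (rule ccontr)
    assume "ecc V E x \<noteq> ecc V E y"
    then consider "ecc V E x < ecc V E y" | "ecc V E y < ecc V E x" by linarith
    then show False
    proof cases
      case 1 then show False using Y.bpos X.bN by fastforce
    next
      case 2 then show False using X.bpos Y.bN by fastforce
    qed
  qed
qed

end

theorem theorem3p6:
  fixes V :: "'a set" and E :: "'a \<Rightarrow> 'a \<Rightarrow> bool"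
  assumes "simple_graph V E" and "connected_graph V E"
    and "lichnerowicz_sharp V E" and "distance_regular V E"
  shows "diam_eff V E = real (Max (Deg V E ` V)) / min_curv V E"
proof -
  obtain b c :: "nat \<Rightarrow> nat" where bc: "\<forall>x\<in>V. \<forall>z\<in>V.
      card {w\<in>V. E z w \<and> gdist V E x w = gdist V E x z + 1} = b (gdist V E x z)
    \<and> card {w\<in>V. E z w \<and> gdist V E x w + 1 = gdist V E x z} = c (gdist V E x z)"
    using assms(4) unfolding distance_regular_def by blast
  interpret DR V E b c by unfold_locales (use assms bc in auto)
  obtain lam f where lam: "lam > 0" "lam = min_curv V E" and fx: "\<exists>x\<in>V. f x \<noteq> 0"
    and eigf: "\<forall>x\<in>V. - laplacian V E f x = lam * f x"
    using assms(3) unfolding lichnerowicz_sharp_def is_eigenvalue_neg_lap_def by blast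
  obtain x where x: "x \<in> V" "f x \<noteq> 0" using fx by blast
  interpret X: DRxf V E b c x f lam by unfold_locales (use x eigf in auto)
  define K where "K = min_curv V E"
  have Kpos: "K > 0" using lam K_def by simp
  have H: "\<And>n. n \<le> ecc V E x \<Longrightarrow> real (b n) - real (c n) = real (b 0) - K * real n"
    using X.lin_all[OF x(2) lam(1) lam(2)] lam(2) K_def by simp
  have sumd: "(\<Sum>z\<in>V. real (gdist V E y z)) = real (b 0) * real (card V) / K" if y: "y \<in> V" for y
  proof -
    interpret Y: DRx V E b c y by unfold_locales (rule y)
    have lz: "laplacian V E (\<lambda>w. real (gdist V E y w)) z = real (b 0) - K * real (gdist V E y z)" if z: "z \<in> V" for z
    proof -
      have "laplacian V E (\<lambda>w. real (gdist V E y w)) z = real (b (gdist V E y z)) - real (c (gdist V E y z))"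
        using lap_radial[OF y z, of real] c0[OF y] by (cases "gdist V E y z") auto
      also have "\<dots> = real (b 0) - K * real (gdist V E y z)"
        using H Y.dle[OF z] ecc_eq[OF x(1) y] by simp
      finally show ?thesis .
    qed
    have "0 = (\<Sum>z\<in>V. laplacian V E (\<lambda>w. real (gdist V E y w)) z)" using sum_lap_zero by simp
    also have "\<dots> = (\<Sum>z\<in>V. real (b 0) - K * real (gdist V E y z))" using lz by simp
    also have "\<dots> = real (card V) * real (b 0) - K * (\<Sum>z\<in>V. real (gdist V E y z))"
      by (simp add: sum_subtractf sum_distrib_left)
    finally have "K * (\<Sum>z\<in>V. real (gdist V E y z)) = real (b 0) * real (card V)" by (simp add: mult.commute)
    then show ?thesis using Kpos by (simp add: field_simps)
  qed
  have cV: "real (card V) > 0" using x(1) finV card_gt_0_iff by fastforce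
  have "diam_eff V E = (1 / real (card V) ^ 2) * (\<Sum>y\<in>V. real (b 0) * real (card V) / K)"
    unfolding diam_eff_def using sumd by simp
  also have "\<dots> = real (b 0) / K" using cV by (simp add: power2_eq_square field_simps)
  also have "Deg V E ` V = {b 0}" using deg x(1) by auto
  then have "real (b 0) = real (Max (Deg V E ` V))" by simp
  finally show ?thesis unfolding K_def .
qed

end
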